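(* Let $(V,L,\varphi,E)$ be a valuation system. Then $\varphi$ is $\Pi$-extendible if and only if for every $b\in L$ and every $\varphi$-convergent sequence $a_1\ge a_2\ge\cdots$ in $L$, $$\textstyle\bigwedge_n a_n\le b \quad\Longrightarrow\quad \bigwedge_n\varphi(a_n)\le\varphi(b).$$
   Context: A valuation system $(V,L,\varphi,E)$ consists of: (i) a lattice $V$ which is $\sigma$-distributive, i.e. for every $a\in V$ and every sequence $(b_n)$ in $V$ whose infimum exists, $\bigwedge_n(a\vee b_n)$ exists and equals $a\vee\bigwedge_n b_n$, and dually for suprema; (ii) a sublattice $L$ of $V$; (iii) a partially ordered abelian group $E$ which is R-complete: whenever $x_1\ge x_2\ge\cdots$ and $y_1\ge y_2\ge\cdots$ in $E$ are such that $\bigwedge_n(x_n+y_n)$ exists, then $\bigwedge_n x_n$ and $\bigwedge_n y_n$ exist, and dually for increasing sequences and suprema; (iv) a valuation $\varphi:L\to E$, i.e. an order-preserving map with $\varphi(a\wedge b)+\varphi(a\vee b)=\varphi(a)+\varphi(b)$. A decreasing sequence $a_1\ge a_2\ge\cdots$ in $L$ is $\varphi$-convergent if $\bigwedge_n a_n$ exists in $V$ and $\bigwedge_n\varphi(a_n)$ exists in $E$. Let $\Pi L:=\{\bigwedge_n a_n: (a_n)\text{ a }\varphi\text{-convergent decreasing sequence in }L\}$ (a sublattice of $V$). $\varphi$ is $\Pi$-extendible if there is a valuation $\Pi\varphi:\Pi L\to E$ with $\Pi\varphi(\bigwedge_n a_n)=\bigwedge_n\varphi(a_n)$ for every $\varphi$-convergent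 decreasing sequence $(a_n)$ in $L$. *)

theory Defs
  imports Main
begin

definition is_glb :: "'a::order set \<Rightarrow> 'a \<Rightarrow> bool" where
  "is_glb S x \<longleftrightarrow> (\<forall>s\<in>S. x \<le> s) \<and> (\<forall>y. (\<forall>s\<in>S. y \<le> s) \<longrightarrow> y \<le> x)"

definition is_lub :: "'a::order set \<Rightarrow> 'a \<Rightarrow> bool" where
  "is_lub S x \<longleftrightarrow> (\<forall>s\<in>S. s \<le> x) \<and> (\<forall>y. (\<forall>s\<in>S. s \<le> y) \<longrightarrow> x \<le> y)"

text \<open>The infimum of a sequence, meaningful when it exists.\<close>
definition seq_inf :: "(nat \<Rightarrow> 'a::order) \<Rightarrow> 'a" where
  "seq_inf a = (THE x. is_glb (range a) x)"

text \<open>sigma-distributivity of the lattice V (taken to be the whole type 'v).\<close>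
definition sigma_distributive :: "'v::lattice itself \<Rightarrow> bool" where
  "sigma_distributive (t::'v itself) \<longleftrightarrow>
     (\<forall>(a::'v) (b::nat \<Rightarrow> 'v) (x::'v). is_glb (range b) x \<longrightarrow> is_glb (range (\<lambda>n. sup a (b n))) (sup a x)) \<and>
     (\<forall>(a::'v) (b::nat \<Rightarrow> 'v) (x::'v). is_lub (range b) x \<longrightarrow> is_lub (range (\<lambda>n. inf a (b n))) (inf a x))"

text \<open>R-completeness of the partially ordered abelian group E (taken to be the whole type 'e).\<close>
definition R_complete :: "'e::ordered_ab_group_add itself \<Rightarrow> bool" where
  "R_complete (t::'e itself) \<longleftrightarrow>
     (\<forall>x y :: nat \<Rightarrow> 'e. antimono x \<longrightarrow> antimono y \<longrightarrow>
        (\<exists>z. is_glb (range (\<lambda>n. x n + y n)) z) \<longrightarrow>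
        (\<exists>u. is_glb (range x) u) \<and> (\<exists>v. is_glb (range y) v)) \<and>
     (\<forall>x y :: nat \<Rightarrow> 'e. mono x \<longrightarrow> mono y \<longrightarrow>
        (\<exists>z. is_lub (range (\<lambda>n. x n + y n)) z) \<longrightarrow>
        (\<exists>u. is_lub (range x) u) \<and> (\<exists>v. is_lub (range y) v))"

definition sublattice :: "'v::lattice set \<Rightarrow> bool" where
  "sublattice L \<longleftrightarrow> (\<forall>a\<in>L. \<forall>b\<in>L. inf a b \<in> L \<and> sup a b \<in> L)"

definition valuation_on :: "'v::lattice set \<Rightarrow> ('v \<Rightarrow> 'e::ordered_ab_group_add) \<Rightarrow> bool" where
  "valuation_on S \<phi> \<longleftrightarrow>
     (\<forall>a\<in>S. \<forall>b\<in>S. a \<le> b \<longrightarrow> \<phi> a \<le> \<phi> b) \<and>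
     (\<forall>a\<in>S. \<forall>b\<in>S. \<phi> (inf a b) + \<phi> (sup a b) = \<phi> a + \<phi> b)"

definition phi_convergent ::
  "'v::lattice set \<Rightarrow> ('v \<Rightarrow> 'e::ordered_ab_group_add) \<Rightarrow> (nat \<Rightarrow> 'v) \<Rightarrow> bool" where
  "phi_convergent L \<phi> a \<longleftrightarrow>
     (\<forall>n. a n \<in> L) \<and> antimono a \<and>
     (\<exists>x. is_glb (range a) x) \<and> (\<exists>y. is_glb (range (\<lambda>n. \<phi> (a n))) y)"

definition Pi_set :: "'v::lattice set \<Rightarrow> ('v \<Rightarrow> 'e::ordered_ab_group_add) \<Rightarrow> 'v set" where
  "Pi_set L \<phi> = {seq_inf a | a. phi_convergent L \<phi> a}"

definition Pi_extendible :: "'v::lattice set \<Rightarrow> ('v \<Rightarrow> 'e::ordered_ab_group_add) \<Rightarrow> bool" where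
  "Pi_extendible L \<phi> \<longleftrightarrow>
     (\<exists>\<psi>. valuation_on (Pi_set L \<phi>) \<psi> \<and>
          (\<forall>a. phi_convergent L \<phi> a \<longrightarrow> \<psi> (seq_inf a) = seq_inf (\<lambda>n. \<phi> (a n))))"

end

theory Submission
  imports Defs
begin

lemma glb_unique: "is_glb S x \<Longrightarrow> is_glb S y \<Longrightarrow> x = y"
  unfolding is_glb_def by (meson order_antisym)

lemma seq_inf_eq: "is_glb (range a) x \<Longrightarrow> seq_inf a = x"
  unfolding seq_inf_def using glb_unique by blast

lemma glb_lb: "is_glb S x \<Longrightarrow> s \<in> S \<Longrightarrow> x \<le> s"
  unfolding is_glb_def by blast

lemma glb_gr: "is_glb S x \<Longrightarrow> (\<And>s. s \<in> S \<Longrightarrow> z \<le> s) \<Longrightarrow> z \<le> x"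
  unfolding is_glb_def by blast

lemma glb_add:
  fixes u v :: "nat \<Rightarrow> 'e::ordered_ab_group_add"
  assumes "antimono u" "antimono v" "is_glb (range u) p" "is_glb (range v) q"
  shows "is_glb (range (\<lambda>n. u n + v n)) (p + q)"
  unfolding is_glb_def
proof (intro conjI allI impI ballI)
  fix s assume "s \<in> range (\<lambda>n. u n + v n)"
  then obtain n where s: "s = u n + v n" by auto
  have "p \<le> u n" "q \<le> v n" using assms glb_lb by blast+
  then show "p + q \<le> s" using s add_mono by blast
next
  fix z assume z: "\<forall>s\<in>range (\<lambda>n. u n + v n). z \<le> s"
  have "z - p \<le> v m" for m
  proof -
    have "z - v m \<le> u n" for n
    proof -
      have "z \<le> u (max n m) + v (max n m)" using z by auto
      also have "\<dots> \<le> u n + v m"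
        using assms(1,2) by (intro add_mono) (auto simp: antimono_def)
      finally show ?thesis by (simp add: algebra_simps le_diff_eq diff_le_eq)
    qed
    then have "z - v m \<le> p" using assms(3) glb_gr by blast
    then show ?thesis by (simp add: algebra_simps le_diff_eq diff_le_eq)
  qed
  then have "z - p \<le> q" using assms(4) glb_gr by blast
  then show "z \<le> p + q" by (simp add: algebra_simps le_diff_eq diff_le_eq)
qed

lemma glb_inf_seq:
  fixes a b :: "nat \<Rightarrow> 'v::lattice"
  assumes "is_glb (range a) x" "is_glb (range b) y"
  shows "is_glb (range (\<lambda>n. inf (a n) (b n))) (inf x y)"
  unfolding is_glb_def
proof (intro conjI allI impI ballI)
  fix s assume "s \<in> range (\<lambda>n. inf (a n) (b n))"
  then obtain n where s: "s = inf (a n) (b n)" by auto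
  have "x \<le> a n" "y \<le> b n" using assms glb_lb by blast+
  then show "inf x y \<le> s" using s by (simp add: le_infI1 le_infI2)
next
  fix z assume z: "\<forall>s\<in>range (\<lambda>n. inf (a n) (b n)). z \<le> s"
  have "z \<le> x" using assms(1) by (rule glb_gr) (use z in auto)
  moreover have "z \<le> y" using assms(2) by (rule glb_gr) (use z in auto)
  ultimately show "z \<le> inf x y" by simp
qed

lemma glb_sup_seq:
  fixes a b :: "nat \<Rightarrow> 'v::lattice"
  assumes sd: "sigma_distributive TYPE('v)" and am: "antimono a" "antimono b"
    and g: "is_glb (range a) x" "is_glb (range b) y"
  shows "is_glb (range (\<lambda>n. sup (a n) (b n))) (sup x y)"
  unfolding is_glb_def
proof (intro conjI allI impI ballI)
  fix s assume "s \<in> range (\<lambda>n. sup (a n) (b n))"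
  then obtain n where s: "s = sup (a n) (b n)" by auto
  have "x \<le> a n" "y \<le> b n" using g glb_lb by blast+
  then show "sup x y \<le> s" using s by (simp add: le_supI1 le_supI2)
next
  fix z assume z: "\<forall>s\<in>range (\<lambda>n. sup (a n) (b n)). z \<le> s"
  have d1: "is_glb (range (\<lambda>n. sup c (a n))) (sup c x)" for c
    using sd g(1) unfolding sigma_distributive_def by blast
  have d2: "is_glb (range (\<lambda>n. sup x (b n))) (sup x y)"
    using sd g(2) unfolding sigma_distributive_def by blast
  have "z \<le> sup x (b m)" for m
  proof -
    have "z \<le> sup (b m) (a n)" for n
    proof -
      have "z \<le> sup (a (max n m)) (b (max n m))" using z by auto
      also have "\<dots> \<le> sup (a n) (b m)"
        using am by (intro sup_mono) (auto simp: antimono_def)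
      finally show ?thesis by (simp add: sup_commute)
    qed
    then have "z \<le> sup (b m) x" using d1[of "b m"] glb_gr by blast
    then show ?thesis by (simp add: sup_commute)
  qed
  then show "z \<le> sup x y" using d2 glb_gr by blast
qed

theorem lemma5p7:
  fixes L :: "'v::lattice set" and \<phi> :: "'v \<Rightarrow> 'e::ordered_ab_group_add"
  assumes "sigma_distributive TYPE('v)"
    and "sublattice L"
    and "R_complete TYPE('e)"
    and "valuation_on L \<phi>"
  shows "Pi_extendible L \<phi> \<longleftrightarrow>
    (\<forall>b\<in>L. \<forall>a. phi_convergent L \<phi> a \<longrightarrow> seq_inf a \<le> b \<longrightarrow> seq_inf (\<lambda>n. \<phi> (a n)) \<le> \<phi> b)"
proof
  assume "Pi_extendible L \<phi>"
  then obtain \<psi> where v: "valuation_on (Pi_set L \<phi>) \<psi>"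
    and e: "\<And>a. phi_convergent L \<phi> a \<Longrightarrow> \<psi> (seq_inf a) = seq_inf (\<lambda>n. \<phi> (a n))"
    unfolding Pi_extendible_def by blast
  show "\<forall>b\<in>L. \<forall>a. phi_convergent L \<phi> a \<longrightarrow> seq_inf a \<le> b \<longrightarrow> seq_inf (\<lambda>n. \<phi> (a n)) \<le> \<phi> b"
  proof (intro ballI allI impI)
    fix b a assume b: "b \<in> L" and a: "phi_convergent L \<phi> a" and le: "seq_inf a \<le> b"
    have gc: "is_glb (range (\<lambda>n::nat. c)) c" for c :: "'w::order"
      unfolding is_glb_def by auto
    have cc: "phi_convergent L \<phi> (\<lambda>n. b)"
      unfolding phi_convergent_def using b by (auto simp: antimono_def is_glb_def)
    have sb: "seq_inf (\<lambda>n::nat. b) = b" using gc seq_inf_eq by blast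
    have sfb: "seq_inf (\<lambda>n::nat. \<phi> b) = \<phi> b" by (rule seq_inf_eq) (auto simp: is_glb_def)
    have "b \<in> Pi_set L \<phi>" unfolding Pi_set_def using cc sb by (metis (mono_tags, lifting) mem_Collect_eq)
    moreover have "seq_inf a \<in> Pi_set L \<phi>" unfolding Pi_set_def using a by blast
    ultimately have "\<psi> (seq_inf a) \<le> \<psi> b" using v le unfolding valuation_on_def by blast
    moreover have "\<psi> b = \<phi> b" using e[OF cc] sb sfb by simp
    ultimately show "seq_inf (\<lambda>n. \<phi> (a n)) \<le> \<phi> b" using e[OF a] by simp
  qed
next
  assume C: "\<forall>b\<in>L. \<forall>a. phi_convergent L \<phi> a \<longrightarrow> seq_inf a \<le> b \<longrightarrow> seq_inf (\<lambda>n. \<phi> (a n)) \<le> \<phi> b"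
  have glbI: "phi_convergent L \<phi> a \<Longrightarrow> is_glb (range a) (seq_inf a)" for a
    unfolding phi_convergent_def using seq_inf_eq by metis
  have glbF: "phi_convergent L \<phi> a \<Longrightarrow> is_glb (range (\<lambda>n. \<phi> (a n))) (seq_inf (\<lambda>n. \<phi> (a n)))" for a
    unfolding phi_convergent_def using seq_inf_eq by metis
  have key: "seq_inf (\<lambda>n. \<phi> (a n)) \<le> seq_inf (\<lambda>n. \<phi> (a' n))"
    if a: "phi_convergent L \<phi> a" and a': "phi_convergent L \<phi> a'" and le: "seq_inf a \<le> seq_inf a'" for a a'
  proof -
    have "seq_inf (\<lambda>n. \<phi> (a n)) \<le> \<phi> (a' m)" for m
    proof -
      have "seq_inf a' \<le> a' m" using glbI[OF a'] glb_lb by blast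
      moreover have "a' m \<in> L" using a' unfolding phi_convergent_def by blast
      ultimately show ?thesis using C a le by (meson order_trans)
    qed
    then show ?thesis using glbF[OF a'] glb_gr by blast
  qed
  define rep where "rep x = (SOME a. phi_convergent L \<phi> a \<and> seq_inf a = x)" for x
  define \<psi> where "\<psi> x = seq_inf (\<lambda>n. \<phi> (rep x n))" for x
  have psi_eq: "\<psi> (seq_inf a) = seq_inf (\<lambda>n. \<phi> (a n))" if a: "phi_convergent L \<phi> a" for a
  proof -
    have r: "phi_convergent L \<phi> (rep (seq_inf a)) \<and> seq_inf (rep (seq_inf a)) = seq_inf a"
      unfolding rep_def by (rule someI[of _ a]) (use a in simp)
    have "seq_inf (\<lambda>n. \<phi> (a n)) \<le> seq_inf (\<lambda>n. \<phi> (rep (seq_inf a) n))"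
      using key[OF a, of "rep (seq_inf a)"] r by simp
    moreover have "seq_inf (\<lambda>n. \<phi> (rep (seq_inf a) n)) \<le> seq_inf (\<lambda>n. \<phi> (a n))"
      using key[OF _ a, of "rep (seq_inf a)"] r by simp
    ultimately show ?thesis unfolding \<psi>_def by (rule order_antisym[rotated])
  qed
  have \<phi>mono: "\<forall>a\<in>L. \<forall>b\<in>L. a \<le> b \<longrightarrow> \<phi> a \<le> \<phi> b"
    and \<phi>mod: "\<forall>a\<in>L. \<forall>b\<in>L. \<phi> (inf a b) + \<phi> (sup a b) = \<phi> a + \<phi> b"
    using assms(4) unfolding valuation_on_def by blast+
  have Lc: "inf a b \<in> L" "sup a b \<in> L" if "a \<in> L" "b \<in> L" for a b
    using assms(2) that unfolding sublattice_def by blast+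
  have RC: "\<And>x y :: nat \<Rightarrow> 'e. antimono x \<Longrightarrow> antimono y \<Longrightarrow>
        (\<exists>z. is_glb (range (\<lambda>n. x n + y n)) z) \<Longrightarrow>
        (\<exists>u. is_glb (range x) u) \<and> (\<exists>v. is_glb (range y) v)"
    using assms(3) unfolding R_complete_def by blast
  have "valuation_on (Pi_set L \<phi>) \<psi>"
    unfolding valuation_on_def
  proof (intro conjI ballI impI)
    fix x y assume x: "x \<in> Pi_set L \<phi>" and y: "y \<in> Pi_set L \<phi>" and le: "x \<le> y"
    obtain a where a: "phi_convergent L \<phi> a" "x = seq_inf a" using x unfolding Pi_set_def by blast
    obtain a' where a': "phi_convergent L \<phi> a'" "y = seq_inf a'" using y unfolding Pi_set_def by blast
    show "\<psi> x \<le> \<psi> y" using key[OF a(1) a'(1)] le unfolding a(2) a'(2) psi_eq[OF a(1)] psi_eq[OF a'(1)] by simp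
  next
    fix x y assume x: "x \<in> Pi_set L \<phi>" and y: "y \<in> Pi_set L \<phi>"
    obtain a where a: "phi_convergent L \<phi> a" "x = seq_inf a" using x unfolding Pi_set_def by blast
    obtain a' where a': "phi_convergent L \<phi> a'" "y = seq_inf a'" using y unfolding Pi_set_def by blast
    define p where "p n = inf (a n) (a' n)" for n
    define q where "q n = sup (a n) (a' n)" for n
    have aL: "a n \<in> L" "a' n \<in> L" for n using a(1) a'(1) unfolding phi_convergent_def by blast+
    have am: "antimono a" "antimono a'" using a(1) a'(1) unfolding phi_convergent_def by blast+
    have pL: "p n \<in> L" "q n \<in> L" for n unfolding p_def q_def using Lc aL by blast+
    have pm: "antimono p" "antimono q"
    proof -
      show "antimono p" unfolding p_def
      proof (rule antimonoI)
        fix m n :: nat assume "m \<le> n"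
        then have "a n \<le> a m" "a' n \<le> a' m" using am by (auto dest: antimonoD)
        then show "inf (a n) (a' n) \<le> inf (a m) (a' m)" by (rule inf_mono)
      qed
      show "antimono q" unfolding q_def
      proof (rule antimonoI)
        fix m n :: nat assume "m \<le> n"
        then have "a n \<le> a m" "a' n \<le> a' m" using am by (auto dest: antimonoD)
        then show "sup (a n) (a' n) \<le> sup (a m) (a' m)" by (rule sup_mono)
      qed
    qed
    have mf: "antimono (\<lambda>n. \<phi> (c n))" if "antimono c" "\<And>n. c n \<in> L" for c :: "nat \<Rightarrow> 'v"
    proof (rule antimonoI)
      fix m n :: nat assume "m \<le> n"
      then have "c n \<le> c m" using that(1) by (auto dest: antimonoD)
      then show "\<phi> (c n) \<le> \<phi> (c m)" using \<phi>mono that(2) by blast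
    qed
    have fpm: "antimono (\<lambda>n. \<phi> (p n))" "antimono (\<lambda>n. \<phi> (q n))"
      using mf pm pL by blast+
    have fam: "antimono (\<lambda>n. \<phi> (a n))" "antimono (\<lambda>n. \<phi> (a' n))"
      using mf am aL by blast+
    have sum: "is_glb (range (\<lambda>n. \<phi> (a n) + \<phi> (a' n)))
        (seq_inf (\<lambda>n. \<phi> (a n)) + seq_inf (\<lambda>n. \<phi> (a' n)))"
      using glb_add[OF fam glbF[OF a(1)] glbF[OF a'(1)]] .
    have eqs: "(\<lambda>n. \<phi> (p n) + \<phi> (q n)) = (\<lambda>n. \<phi> (a n) + \<phi> (a' n))"
      using \<phi>mod aL unfolding p_def q_def by auto
    obtain P Q where P: "is_glb (range (\<lambda>n. \<phi> (p n))) P" and Q: "is_glb (range (\<lambda>n. \<phi> (q n))) Q"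
    proof -
      have "\<exists>z. is_glb (range (\<lambda>n. \<phi> (p n) + \<phi> (q n))) z" unfolding eqs using sum by blast
      from RC[OF fpm this] show ?thesis using that by blast
    qed
    have gp: "is_glb (range p) (inf x y)" unfolding p_def a(2) a'(2)
      using glb_inf_seq[OF glbI[OF a(1)] glbI[OF a'(1)]] .
    have gq: "is_glb (range q) (sup x y)" unfolding q_def a(2) a'(2)
      using glb_sup_seq[OF assms(1) am glbI[OF a(1)] glbI[OF a'(1)]] .
    have pc: "phi_convergent L \<phi> p" unfolding phi_convergent_def using pL pm gp P by blast
    have qc: "phi_convergent L \<phi> q" unfolding phi_convergent_def using pL pm gq Q by blast
    have "\<psi> (inf x y) = P" using psi_eq[OF pc] seq_inf_eq[OF gp] seq_inf_eq[OF P] by simp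
    moreover have "\<psi> (sup x y) = Q" using psi_eq[OF qc] seq_inf_eq[OF gq] seq_inf_eq[OF Q] by simp
    moreover have "\<psi> x + \<psi> y = seq_inf (\<lambda>n. \<phi> (a n)) + seq_inf (\<lambda>n. \<phi> (a' n))"
      unfolding a(2) a'(2) psi_eq[OF a(1)] psi_eq[OF a'(1)] ..
    moreover have "P + Q = seq_inf (\<lambda>n. \<phi> (a n)) + seq_inf (\<lambda>n. \<phi> (a' n))"
      using glb_add[OF fpm P Q] sum unfolding eqs by (rule glb_unique)
    ultimately show "\<psi> (inf x y) + \<psi> (sup x y) = \<psi> x + \<psi> y" by simp
  qed
  then show "Pi_extendible L \<phi>" unfolding Pi_extendible_def using psi_eq by blast
qed

end
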